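(* Consider the following online reputation model. A random state $x\in\mathbb X=\{1,\dots,X\}$ has prior $\pi_0$ with $\pi_0(i)>0$ for all $i$. Nodes $n=1,2,\dots$ (node $n$ represents agent $s$ at time $k$ via $n=s+S(k-1)$, $s\in\{1,\dots,S\}$) act in increasing order of $n$. Information flow is given by a directed acyclic graph on $\{1,2,\dots\}$ whose edges $(m,n)$ all satisfy $m<n$; $A_n$ is its $n\times n$ adjacency matrix restricted to nodes $1,\dots,n$, with $A_n(m,n')=1$ iff there is an edge from $m$ to $n'$ (so $A_n$ is strictly upper triangular), and $T_n=\operatorname{sgn}((I_n-A_n)^{-1})$ is its transitive closure matrix ($\operatorname{sgn}$ applied entrywise: $0\mapsto0$, nonzero $\mapsto1$). Let $\mathcal F_n=\{m<n: T_n(m,n)=1\}$ (nodes with a directed path to $n$). Private observations $y_1,y_2,\dots\in\mathbb Y=\{1,\dots,Y\}$ are conditionally i.i.d. given $x$ with $P(y_n=y\mid x=i)=B_{iy}>0$. Node $n$ proceeds as follows: it is given a prior (recommendation) belief $\pi_{n-}$; it computes $\eta_n=B_{y_n}\pi_{n-}/(\mathbf 1_X'B_{y_n}\pi_{n-})$ with $B_y=\operatorname{diag}(B_{1y},\dots,B_{Xy})$; it takes the action $a_n=a(\pi_{n-},y_n):=\arg\min_{a\in\mathcal A}c_a'\eta_n$ (fixed deterministic tie-breaking, given cost vectors $c_a$, $\mathcal A=\{1,\dots,A\}$); and the administrator computes the public belief $\pi_n(i)\propto P(a_n\mid x=i,\pi_{n-})\,\pi_{n-}(i)$, where $P(a\mid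 x=i,\pi)=\sum_{y}\mathbf 1\{a(\pi,y)=a\}B_{iy}$. Define $l_m(i)=\log\pi_m(i)-\log\pi_0(i)$. Suppose that for every $n$ the recommendation belief is computed by $$\log\pi_{n-}(i)=\log\pi_0(i)+\sum_{m=1}^{n-1}w_n(m)\,l_m(i)+\text{const}_n,\qquad w_n=T_{n-1}^{-1}t_n,$$ where $\text{const}_n$ does not depend on $i$ (it is fixed by normalization), $T_{n-1}$ is the upper-left $(n-1)\times(n-1)$ block of $T_n$ and $t_n\in\{0,1\}^{n-1}$ consists of the first $n-1$ entries of the $n$-th column of $T_n$ (for $n=1$ the sum is empty and $\pi_{1-}=\pi_0$). Then for every $n$ and $i\in\mathbb X$, $$\pi_{n-}(i)=\pi^0_{n-}(i):=P\big(x=i\mid \{a_m: m\in\mathcal F_n\}\big),$$ i.e. the recommendation equals the fair (incest-free) rating; consequently $\eta_n(i)=P(x=i\mid\{a_m:m\in\mathcal F_n\},y_n)$ and $\pi_n(i)=P(x=i\mid\{a_m:m\in\mathcal F_n\},a_n)$.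
   Context: Here $\pi^0_{n-}$ is called the fair online rating available to node $n$: it is the posterior of $x$ given exactly the actions of all nodes whose information eventually reaches node $n$ through the graph. $T_n$ has ones on the diagonal and $T_{n-1}$ is unit upper triangular, hence invertible. $\mathbf 1_X$ is the all-ones vector. *)

theory Defs
  imports Complex_Main "Jordan_Normal_Form.Matrix"
begin

(* Conventions: states x in {0..<X}, observations y in {0..<Y}, actions in {0..<A}
   (0-based relabelling of the paper's 1-based index sets); nodes n = 1,2,... are 1-based.
   B i y = P(y_n = y | x = i); c a i = i-th entry of cost vector c_a. *)

definition normalize :: "nat \<Rightarrow> (nat \<Rightarrow> real) \<Rightarrow> (nat \<Rightarrow> real)" where
  "normalize X v = (\<lambda>i. v i / (\<Sum>j<X. v j))"

definition eta :: "nat \<Rightarrow> (nat \<Rightarrow> nat \<Rightarrow> real) \<Rightarrow> (nat \<Rightarrow> real) \<Rightarrow> nat \<Rightarrow> (nat \<Rightarrow> real)" where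
  "eta X B p y = normalize X (\<lambda>i. B i y * p i)"

definition act_prob :: "nat \<Rightarrow> nat \<Rightarrow> (nat \<Rightarrow> nat \<Rightarrow> real) \<Rightarrow> ((nat \<Rightarrow> real) \<Rightarrow> nat)
    \<Rightarrow> (nat \<Rightarrow> real) \<Rightarrow> nat \<Rightarrow> nat \<Rightarrow> real" where
  "act_prob X Y B act p a i = (\<Sum>y<Y. if act (eta X B p y) = a then B i y else 0)"

definition pub_update :: "nat \<Rightarrow> nat \<Rightarrow> (nat \<Rightarrow> nat \<Rightarrow> real) \<Rightarrow> ((nat \<Rightarrow> real) \<Rightarrow> nat)
    \<Rightarrow> (nat \<Rightarrow> real) \<Rightarrow> nat \<Rightarrow> (nat \<Rightarrow> real)" where
  "pub_update X Y B act p a = normalize X (\<lambda>i. act_prob X Y B act p a i * p i)"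

text \<open>Adjacency matrix A_n (matrix index i corresponds to node i+1)\<close>
definition adj_mat :: "(nat \<Rightarrow> nat \<Rightarrow> bool) \<Rightarrow> nat \<Rightarrow> real mat" where
  "adj_mat E n = mat n n (\<lambda>(i, j). if E (Suc i) (Suc j) then 1 else 0)"

definition mat_inv :: "real mat \<Rightarrow> real mat" where
  "mat_inv M = (SOME N. inverts_mat M N \<and> inverts_mat N M)"

definition tc_mat :: "(nat \<Rightarrow> nat \<Rightarrow> bool) \<Rightarrow> nat \<Rightarrow> real mat" where
  "tc_mat E n = map_mat sgn (mat_inv (1\<^sub>m n - adj_mat E n))"

text \<open>w_n = T_{n-1}^{-1} t_n, with T_{n-1} the upper-left block of T_n and t_n the first
  n-1 entries of the n-th column of T_n. Entry w_n(m) is (weights E n) $ (m-1).\<close>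
definition weights :: "(nat \<Rightarrow> nat \<Rightarrow> bool) \<Rightarrow> nat \<Rightarrow> real vec" where
  "weights E n = (let T = tc_mat E n;
                      Tm = mat (n - 1) (n - 1) (\<lambda>(i, j). T $$ (i, j));
                      t = vec (n - 1) (\<lambda>i. T $$ (i, n - 1))
                  in mat_inv Tm *\<^sub>v t)"

definition fair_set :: "(nat \<Rightarrow> nat \<Rightarrow> bool) \<Rightarrow> nat \<Rightarrow> nat set" where
  "fair_set E n = {m. 1 \<le> m \<and> m < n \<and> tc_mat E n $$ (m - 1, n - 1) = 1}"

text \<open>Recommendation belief pi_{n-}, given ps = [pi_1, ..., pi_{n-1}]:
  log pi_{n-}(i) = log pi_0(i) + sum_{m=1}^{n-1} w_n(m) l_m(i) + const_n, const_n fixed by normalization.\<close>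
definition rec_belief :: "nat \<Rightarrow> (nat \<Rightarrow> real) \<Rightarrow> (nat \<Rightarrow> nat \<Rightarrow> bool) \<Rightarrow> nat
    \<Rightarrow> (nat \<Rightarrow> real) list \<Rightarrow> (nat \<Rightarrow> real)" where
  "rec_belief X pi0 E n ps = normalize X (\<lambda>i. pi0 i *
      exp (\<Sum>m = 1..<n. weights E n $ (m - 1) * (ln ((ps ! (m - 1)) i) - ln (pi0 i))))"

text \<open>List [pi_1, ..., pi_n] of public beliefs along the observation path ys (ys k = y_k).\<close>
fun pubs :: "nat \<Rightarrow> nat \<Rightarrow> (nat \<Rightarrow> real) \<Rightarrow> (nat \<Rightarrow> nat \<Rightarrow> real) \<Rightarrow> ((nat \<Rightarrow> real) \<Rightarrow> nat)
    \<Rightarrow> (nat \<Rightarrow> nat \<Rightarrow> bool) \<Rightarrow> (nat \<Rightarrow> nat) \<Rightarrow> nat \<Rightarrow> (nat \<Rightarrow> real) list" where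
  "pubs X Y pi0 B act E ys 0 = []"
| "pubs X Y pi0 B act E ys (Suc n) =
     (let ps = pubs X Y pi0 B act E ys n;
          pm = rec_belief X pi0 E (Suc n) ps
      in ps @ [pub_update X Y B act pm (act (eta X B pm (ys (Suc n))))])"

definition prior_belief :: "nat \<Rightarrow> nat \<Rightarrow> (nat \<Rightarrow> real) \<Rightarrow> (nat \<Rightarrow> nat \<Rightarrow> real) \<Rightarrow> ((nat \<Rightarrow> real) \<Rightarrow> nat)
    \<Rightarrow> (nat \<Rightarrow> nat \<Rightarrow> bool) \<Rightarrow> (nat \<Rightarrow> nat) \<Rightarrow> nat \<Rightarrow> (nat \<Rightarrow> real)" where
  "prior_belief X Y pi0 B act E ys n = rec_belief X pi0 E n (pubs X Y pi0 B act E ys (n - 1))"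

definition post_belief :: "nat \<Rightarrow> nat \<Rightarrow> (nat \<Rightarrow> real) \<Rightarrow> (nat \<Rightarrow> nat \<Rightarrow> real) \<Rightarrow> ((nat \<Rightarrow> real) \<Rightarrow> nat)
    \<Rightarrow> (nat \<Rightarrow> nat \<Rightarrow> bool) \<Rightarrow> (nat \<Rightarrow> nat) \<Rightarrow> nat \<Rightarrow> (nat \<Rightarrow> real)" where
  "post_belief X Y pi0 B act E ys n = eta X B (prior_belief X Y pi0 B act E ys n) (ys n)"

definition action :: "nat \<Rightarrow> nat \<Rightarrow> (nat \<Rightarrow> real) \<Rightarrow> (nat \<Rightarrow> nat \<Rightarrow> real) \<Rightarrow> ((nat \<Rightarrow> real) \<Rightarrow> nat)
    \<Rightarrow> (nat \<Rightarrow> nat \<Rightarrow> bool) \<Rightarrow> (nat \<Rightarrow> nat) \<Rightarrow> nat \<Rightarrow> nat" where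
  "action X Y pi0 B act E ys n = act (post_belief X Y pi0 B act E ys n)"

definition public_belief :: "nat \<Rightarrow> nat \<Rightarrow> (nat \<Rightarrow> real) \<Rightarrow> (nat \<Rightarrow> nat \<Rightarrow> real) \<Rightarrow> ((nat \<Rightarrow> real) \<Rightarrow> nat)
    \<Rightarrow> (nat \<Rightarrow> nat \<Rightarrow> bool) \<Rightarrow> (nat \<Rightarrow> nat) \<Rightarrow> nat \<Rightarrow> (nat \<Rightarrow> real)" where
  "public_belief X Y pi0 B act E ys n = pubs X Y pi0 B act E ys n ! (n - 1)"

text \<open>Conditional probability P(x = i | ev(y_1,...,y_N)) in the model where x ~ pi0 and
  y_1,...,y_N are i.i.d. given x with P(y = y | x = i) = B i y.\<close>
definition cond_prob :: "nat \<Rightarrow> nat \<Rightarrow> (nat \<Rightarrow> real) \<Rightarrow> (nat \<Rightarrow> nat \<Rightarrow> real) \<Rightarrow> nat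
    \<Rightarrow> ((nat \<Rightarrow> nat) \<Rightarrow> bool) \<Rightarrow> nat \<Rightarrow> real" where
  "cond_prob X Y pi0 B N ev i =
     (\<Sum>zs \<in> PiE {1..N} (\<lambda>_. {..<Y}). if ev zs then pi0 i * (\<Prod>k = 1..N. B i (zs k)) else 0)
     / (\<Sum>j<X. \<Sum>zs \<in> PiE {1..N} (\<lambda>_. {..<Y}). if ev zs then pi0 j * (\<Prod>k = 1..N. B j (zs k)) else 0)"

end

theory Submission
  imports Defs "Jordan_Normal_Form.Determinant"
begin


lemma unit_upper_inv:
  fixes M :: "real mat"
  assumes M: "M \<in> carrier_mat n n" and ut: "upper_triangular M"
    and d: "\<And>i. i < n \<Longrightarrow> M $$ (i,i) = 1"
  shows "mat_inv M \<in> carrier_mat n n \<and> M * mat_inv M = 1\<^sub>m n \<and> mat_inv M * M = 1\<^sub>m n"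
proof -
  have "diag_mat M = map (\<lambda>i. 1) [0..<n]"
    using M d unfolding diag_mat_def by (auto intro: map_cong)
  moreover have "prod_list (map (\<lambda>i. (1::real)) xs) = 1" for xs :: "nat list" by (induct xs) auto
  ultimately have "det M = 1" using det_upper_triangular[OF ut M] by simp
  hence "M \<in> Units (ring_mat TYPE(real) n ())" using det_non_zero_imp_unit[OF M] by simp
  then obtain N where N: "N \<in> carrier_mat n n" "N * M = 1\<^sub>m n" "M * N = 1\<^sub>m n"
    unfolding Units_def ring_mat_simps by auto
  have ex: "\<exists>N. inverts_mat M N \<and> inverts_mat N M"
    using N M unfolding inverts_mat_def by auto
  define K where "K = mat_inv M"
  have K: "inverts_mat M K \<and> inverts_mat K M"
    unfolding K_def mat_inv_def by (rule someI_ex[OF ex])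
  hence 1: "M * K = 1\<^sub>m n" using M unfolding inverts_mat_def by auto
  hence "dim_col K = n" by (metis index_mult_mat(3) index_one_mat(3))
  from K have 2: "K * M = 1\<^sub>m (dim_row K)" unfolding inverts_mat_def by auto
  hence "dim_row K = n" using M by (metis carrier_matD(2) index_mult_mat(3) index_one_mat(3))
  with 1 2 \<open>dim_col K = n\<close> show ?thesis unfolding K_def by auto
qed

inductive reach :: "(nat \<Rightarrow> nat \<Rightarrow> bool) \<Rightarrow> nat \<Rightarrow> nat \<Rightarrow> bool" for E where
  rrefl: "reach E k k"
| rstep: "reach E k p \<Longrightarrow> E (Suc p) (Suc l) \<Longrightarrow> reach E k l"

lemma reach_le:
  assumes dag: "\<And>m n. E m n \<Longrightarrow> m < n"
  shows "reach E k l \<Longrightarrow> k \<le> l"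
  by (induction rule: reach.induct) (auto dest: dag)

lemma reach_trans: "reach E k l \<Longrightarrow> reach E j k \<Longrightarrow> reach E j l"
  by (induction rule: reach.induct) (auto intro: reach.intros)

lemma reach_iff: "reach E k l \<longleftrightarrow> k = l \<or> (\<exists>p. reach E k p \<and> E (Suc p) (Suc l))"
  by (subst reach.simps) auto

lemma IA_carrier: "1\<^sub>m n - Defs.adj_mat E n \<in> carrier_mat n n"
  unfolding Defs.adj_mat_def by auto

lemma IA_index: "i < n \<Longrightarrow> j < n \<Longrightarrow> (1\<^sub>m n - Defs.adj_mat E n) $$ (i,j) =
   (if i = j then 1 else 0) - (if E (Suc i) (Suc j) then 1 else 0)"
  unfolding Defs.adj_mat_def by auto

lemma IA_inv:
  assumes dag: "\<And>m n. E m n \<Longrightarrow> m < n"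
  shows "mat_inv (1\<^sub>m n - Defs.adj_mat E n) \<in> carrier_mat n n \<and>
     (1\<^sub>m n - Defs.adj_mat E n) * mat_inv (1\<^sub>m n - Defs.adj_mat E n) = 1\<^sub>m n \<and>
     mat_inv (1\<^sub>m n - Defs.adj_mat E n) * (1\<^sub>m n - Defs.adj_mat E n) = 1\<^sub>m n"
proof (rule unit_upper_inv[OF IA_carrier])
  show "upper_triangular (1\<^sub>m n - Defs.adj_mat E n)" unfolding upper_triangular_def
  proof (intro allI impI)
    fix i j assume i: "i < dim_row (1\<^sub>m n - Defs.adj_mat E n)" and ji: "j < i"
    have "i < n" using i IA_carrier[of n E] by auto
    moreover have "\<not> E (Suc i) (Suc j)" using dag[of "Suc i" "Suc j"] ji by auto
    ultimately show "(1\<^sub>m n - Defs.adj_mat E n) $$ (i, j) = 0" using IA_index[of i n j E] ji by simp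
  qed
  show "\<And>i. i < n \<Longrightarrow> (1\<^sub>m n - Defs.adj_mat E n) $$ (i, i) = 1"
  proof -
    fix i assume i: "i < n"
    show "(1\<^sub>m n - Defs.adj_mat E n) $$ (i, i) = 1" using IA_index[of i n i E] dag[of "Suc i" "Suc i"] i by auto
  qed
qed

lemma tc_reach:
  assumes dag: "\<And>m n. E m n \<Longrightarrow> m < n"
  shows "tc_mat E n \<in> carrier_mat n n \<and>
    (\<forall>k<n. \<forall>l<n. tc_mat E n $$ (k,l) = (if reach E k l then 1 else 0))"
proof -
  define M where "M = 1\<^sub>m n - Defs.adj_mat E n"
  define N where "N = mat_inv M"
  have N: "N \<in> carrier_mat n n" "N * M = 1\<^sub>m n" using IA_inv[OF dag] unfolding M_def N_def by auto
  have rec: "N $$ (k,l) = (if k = l then 1 else 0) + (\<Sum>p\<in>{0..<n}. if E (Suc p) (Suc l) then N $$ (k,p) else 0)"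
    if k: "k < n" and l: "l < n" for k l
  proof -
    have "(if k = l then 1 else 0) = (N * M) $$ (k,l)" using N k l by simp
    also have "\<dots> = (\<Sum>p\<in>{0..<n}. N $$ (k,p) * M $$ (p,l))"
      using N(1) k l IA_carrier[of n E] unfolding M_def
      by (subst index_mult_mat) (auto simp: scalar_prod_def Defs.adj_mat_def intro!: sum.cong)
    also have "\<dots> = (\<Sum>p\<in>{0..<n}. (if p = l then N $$ (k,p) else 0) - (if E (Suc p) (Suc l) then N $$ (k,p) else 0))"
      using l unfolding M_def by (intro sum.cong) (auto simp: IA_index)
    also have "\<dots> = N $$ (k,l) - (\<Sum>p\<in>{0..<n}. if E (Suc p) (Suc l) then N $$ (k,p) else 0)"
      using l by (simp add: sum_subtractf)
    finally show ?thesis by simp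
  qed
  have main: "\<forall>k<n. 0 \<le> N $$ (k,l) \<and> (0 < N $$ (k,l) \<longleftrightarrow> reach E k l)" if "l < n" for l
    using that
  proof (induction l rule: less_induct)
    case (less l)
    show ?case
    proof (intro allI impI)
      fix k assume k: "k < n"
      define f where "f = (\<lambda>p. if E (Suc p) (Suc l) then N $$ (k,p) else 0)"
      have fnn: "\<And>p. p \<in> {0..<n} \<Longrightarrow> 0 \<le> f p"
      proof -
        fix p assume p: "p \<in> {0..<n}"
        show "0 \<le> f p"
        proof (cases "E (Suc p) (Suc l)")
          case True
          hence "p < l" using dag by fastforce
          thus ?thesis using less.IH[of p] less.prems k True unfolding f_def by auto
        qed (simp add: f_def)
      qed
      have s0: "0 \<le> sum f {0..<n}" using fnn by (rule sum_nonneg)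
      have "0 < sum f {0..<n} \<longleftrightarrow> (\<exists>p\<in>{0..<n}. 0 < f p)"
      proof
        assume "0 < sum f {0..<n}"
        hence "sum f {0..<n} \<noteq> 0" by simp
        hence "\<not> (\<forall>p\<in>{0..<n}. f p = 0)" using sum_nonneg_eq_0_iff[of "{0..<n}" f] fnn by blast
        then obtain p where p: "p \<in> {0..<n}" "f p \<noteq> 0" by blast
        hence "0 < f p" using fnn[OF p(1)] by linarith
        thus "\<exists>p\<in>{0..<n}. 0 < f p" using p(1) by blast
      next
        assume "\<exists>p\<in>{0..<n}. 0 < f p"
        then obtain p where p: "p \<in> {0..<n}" "0 < f p" by blast
        show "0 < sum f {0..<n}" by (rule sum_pos2[of "{0..<n}" p f]) (use p fnn in auto)
      qed
      also have "\<dots> \<longleftrightarrow> (\<exists>p. reach E k p \<and> E (Suc p) (Suc l))"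
      proof
        assume "\<exists>p\<in>{0..<n}. 0 < f p"
        then obtain p where p: "p < n" "0 < f p" by auto
        hence e: "E (Suc p) (Suc l)" by (auto simp: f_def split: if_splits)
        hence "p < l" using dag by fastforce
        hence "reach E k p" using less.IH[of p] less.prems k p e unfolding f_def by auto
        thus "\<exists>p. reach E k p \<and> E (Suc p) (Suc l)" using e by blast
      next
        assume "\<exists>p. reach E k p \<and> E (Suc p) (Suc l)"
        then obtain p where p: "reach E k p" "E (Suc p) (Suc l)" by auto
        hence "p < l" using dag by fastforce
        hence "0 < f p" using p less k unfolding f_def by auto
        then show "\<exists>p\<in>{0..<n}. 0 < f p" using \<open>p < l\<close> less.prems by (intro bexI[of _ p]) auto
      qed
      finally have eq: "0 < sum f {0..<n} \<longleftrightarrow> (\<exists>p. reach E k p \<and> E (Suc p) (Suc l))" .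
      have r: "N $$ (k,l) = (if k = l then 1 else 0) + sum f {0..<n}" unfolding f_def by (rule rec[OF k less.prems])
      show "0 \<le> N $$ (k,l) \<and> (0 < N $$ (k,l) \<longleftrightarrow> reach E k l)"
        using r s0 eq reach_iff[of E k l] by auto
    qed
  qed
  have "tc_mat E n = map_mat sgn N" unfolding tc_mat_def N_def M_def by simp
  moreover have "\<forall>k<n. \<forall>l<n. map_mat sgn N $$ (k,l) = (if reach E k l then 1 else 0)"
  proof (intro allI impI)
    fix k l assume k: "k < n" and l: "l < n"
    have 1: "map_mat sgn N $$ (k,l) = sgn (N $$ (k,l))" using N(1) k l by auto
    have 2: "0 \<le> N $$ (k,l)" "(0 < N $$ (k,l)) = reach E k l" using main[OF l] k by auto
    show "map_mat sgn N $$ (k,l) = (if reach E k l then 1 else 0)"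
    proof (cases "reach E k l")
      case True
      thus ?thesis using 1 2 by simp
    next
      case False
      hence "N $$ (k,l) = 0" using 2 by linarith
      thus ?thesis using 1 False by simp
    qed
  qed
  ultimately show ?thesis using N(1) by auto
qed

lemma weights_prop:
  assumes dag: "\<And>m n. E m n \<Longrightarrow> m < n" and j: "j < n - 1"
  shows "(\<Sum>k<n-1. (if reach E j k then 1 else 0) * weights E n $ k) = (if reach E j (n-1) then 1 else 0)"
proof -
  define T where "T = tc_mat E n"
  define Tm where "Tm = mat (n - 1) (n - 1) (\<lambda>(i, j). T $$ (i, j))"
  define t where "t = vec (n - 1) (\<lambda>i. T $$ (i, n - 1))"
  have TT: "\<forall>k<n. \<forall>l<n. T $$ (k,l) = (if reach E k l then 1 else 0)"
    using tc_reach[OF dag] unfolding T_def by blast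
  have Tm: "Tm \<in> carrier_mat (n-1) (n-1)" unfolding Tm_def by auto
  have Tmi: "i < n-1 \<Longrightarrow> l < n-1 \<Longrightarrow> Tm $$ (i,l) = (if reach E i l then 1 else 0)" for i l
    unfolding Tm_def using TT by auto
  have ut: "upper_triangular Tm" unfolding upper_triangular_def
    using Tmi reach_le[OF dag] Tm by fastforce
  have inv: "mat_inv Tm \<in> carrier_mat (n-1) (n-1) \<and> Tm * mat_inv Tm = 1\<^sub>m (n-1)"
    using unit_upper_inv[OF Tm ut] Tmi by (simp add: reach.rrefl)
  have w: "weights E n = mat_inv Tm *\<^sub>v t" unfolding weights_def Let_def T_def Tm_def t_def by simp
  have tc: "t \<in> carrier_vec (n-1)" unfolding t_def by simp
  have "Tm *\<^sub>v weights E n = t" unfolding w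
    using inv Tm tc by (subst assoc_mult_mat_vec[symmetric, of _ "n-1" "n-1" _ "n-1"]) auto
  hence "(Tm *\<^sub>v weights E n) $ j = t $ j" by simp
  moreover have "(Tm *\<^sub>v weights E n) $ j = (\<Sum>k<n-1. (if reach E j k then 1 else 0) * weights E n $ k)"
    using j Tm inv unfolding w by (auto simp: scalar_prod_def Tmi atLeast0LessThan intro!: sum.cong)
  moreover have "t $ j = (if reach E j (n-1) then 1 else 0)" unfolding t_def using j TT by auto
  ultimately show ?thesis by simp
qed

lemma weights_zero:
  assumes dag: "\<And>m n. E m n \<Longrightarrow> m < n" and k: "k < n - 1" and nr: "\<not> reach E k (n-1)"
  shows "weights E n $ k = 0"
  using k nr
proof (induction "n - 1 - k" arbitrary: k rule: less_induct)
  case less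
  let ?f = "\<lambda>l. (if reach E k l then 1 else 0) * weights E n $ l"
  have eq: "(\<Sum>l<n-1. ?f l) = 0" using weights_prop[OF dag less.prems(1)] less.prems(2) by simp
  have others: "?f l = 0" if l: "l \<in> {..<n-1} - {k}" for l
  proof (cases "reach E k l")
    case True
    hence "k < l" using reach_le[OF dag True] l by auto
    moreover have "\<not> reach E l (n-1)" using True less.prems(2) reach_trans by blast
    ultimately have "weights E n $ l = 0" using less.hyps[of l] l by auto
    thus ?thesis by simp
  qed simp
  have "(\<Sum>l<n-1. ?f l) = ?f k + (\<Sum>l\<in>{..<n-1} - {k}. ?f l)"
    using less.prems(1) by (subst sum.remove[of _ k]) auto
  also have "(\<Sum>l\<in>{..<n-1} - {k}. ?f l) = 0" using others by (intro sum.neutral) blast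
  finally show ?case using eq by (simp add: reach.rrefl)
qed


lemma normalize_cong: "(\<And>j. j < X \<Longrightarrow> f j = g j) \<Longrightarrow> i < X \<Longrightarrow> normalize X f i = normalize X g i"
  unfolding normalize_def by simp

lemma normalize_scale: "c \<noteq> 0 \<Longrightarrow> normalize X (\<lambda>i. c * f i) = normalize X f"
  unfolding normalize_def by (rule ext) (simp add: sum_distrib_left[symmetric])

lemma normalize_nested: "(\<Sum>j<X. r j) \<noteq> 0 \<Longrightarrow>
   normalize X (\<lambda>i. a i * normalize X r i) = normalize X (\<lambda>i. a i * r i)"
proof -
  assume s: "(\<Sum>j<X. r j) \<noteq> 0"
  have "normalize X (\<lambda>i. a i * normalize X r i) = normalize X (\<lambda>i. inverse (\<Sum>j<X. r j) * (a i * r i))"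
    unfolding normalize_def[of X r] by (simp add: field_simps)
  also have "\<dots> = normalize X (\<lambda>i. a i * r i)" using s by (intro normalize_scale) simp
  finally show ?thesis .
qed

lemma fair_set_reach:
  assumes dag: "\<And>m n. E m n \<Longrightarrow> m < n"
  shows "fair_set E n = {m. 1 \<le> m \<and> m < n \<and> reach E (m-1) (n-1)}"
proof -
  have h: "\<And>k l. k < n \<Longrightarrow> l < n \<Longrightarrow> (tc_mat E n $$ (k,l) = 1) = reach E k l"
    using tc_reach[of E n, OF dag] by simp
  show ?thesis unfolding fair_set_def using h by auto
qed

lemma fair_sub:
  assumes dag: "\<And>m n. E m n \<Longrightarrow> m < n"
  shows "fair_set E n \<subseteq> {1..<n}"
  using fair_set_reach[OF dag] by auto

lemma fair_trans:
  assumes dag: "\<And>m n. E m n \<Longrightarrow> m < n"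
  shows "k \<in> fair_set E n \<Longrightarrow> fair_set E k \<subseteq> fair_set E n"
proof
  fix x assume k: "k \<in> fair_set E n" and x: "x \<in> fair_set E k"
  have k': "1 \<le> k" "k < n" "reach E (k-1) (n-1)" using k fair_set_reach[of E n, OF dag] by auto
  have x': "1 \<le> x" "x < k" "reach E (x-1) (k-1)" using x fair_set_reach[of E k, OF dag] by auto
  have "reach E (x-1) (n-1)" using reach_trans[OF k'(3) x'(3)] .
  thus "x \<in> fair_set E n" using k' x' fair_set_reach[of E n, OF dag] by auto
qed

lemma shift_sum: "(\<Sum>k=1..<(n::nat). g (k-1)) = (\<Sum>k<n-1. (g k :: real))"
proof (cases n)
  case (Suc m)
  have "(\<Sum>k=1..<n. g (k-1)) = (\<Sum>k\<in>{Suc 0..<Suc m}. g (k-1))" using Suc by simp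
  also have "\<dots> = (\<Sum>k\<in>{0..<m}. g k)" by (subst sum.shift_bounds_Suc_ivl) simp
  finally show ?thesis using Suc by (simp add: atLeast0LessThan)
qed simp

lemma sum_if_filter: "finite A \<Longrightarrow> (\<Sum>m\<in>A. (if P m then 1 else 0) * g m) = sum g {m\<in>A. P m}"
  for g :: "'a \<Rightarrow> real"
  by (subst sum.inter_filter) (auto intro!: sum.cong)

lemma sum_if_const: "(\<Sum>x\<in>A. if Q x then c * g x else 0) = c * (\<Sum>x\<in>A. if Q x then g x else (0::real))"
  by (auto simp: sum_distrib_left intro: sum.cong)

lemma sum_PiE_peel: "(\<Sum>zs\<in>PiE {1..Suc N} (\<lambda>_. {..<Y::nat}). f zs)
   = (\<Sum>zs\<in>PiE {1..N} (\<lambda>_. {..<Y}). \<Sum>y<Y. (f (zs(Suc N := y)) :: real))"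
proof -
  have ins: "{1..Suc N} = insert (Suc N) {1..N}" by auto
  have nin: "Suc N \<notin> {1..N}" by simp
  have "(\<Sum>zs\<in>PiE {1..Suc N} (\<lambda>_. {..<Y::nat}). f zs)
     = sum (f \<circ> (\<lambda>(y, g). g(Suc N := y))) ({..<Y} \<times> PiE {1..N} (\<lambda>_. {..<Y}))"
    unfolding ins PiE_insert_eq by (rule sum.reindex[OF inj_combinator[OF nin]])
  also have "\<dots> = (\<Sum>y<Y. \<Sum>zs\<in>PiE {1..N} (\<lambda>_. {..<Y}). f (zs(Suc N := y)))"
    by (simp add: sum.cartesian_product split_def comp_def)
  also have "\<dots> = (\<Sum>zs\<in>PiE {1..N} (\<lambda>_. {..<Y}). \<Sum>y<Y. f (zs(Suc N := y)))"
    by (rule sum.swap)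
  finally show ?thesis .
qed

lemma prod_upd_split: "(\<Prod>k=1..Suc N. (B::nat\<Rightarrow>nat\<Rightarrow>real) i ((zs(Suc N:=y)) k)) = B i y * (\<Prod>k=1..N. B i (zs k))"
proof -
  have ins: "{1..Suc N} = insert (Suc N) {1..N}" by auto
  show ?thesis unfolding ins by (simp add: prod.insert)
qed

locale model =
  fixes X Y :: nat and pi0 :: "nat \<Rightarrow> real" and B :: "nat \<Rightarrow> nat \<Rightarrow> real"
    and act :: "(nat \<Rightarrow> real) \<Rightarrow> nat" and E :: "nat \<Rightarrow> nat \<Rightarrow> bool"
  assumes X_pos: "X \<ge> 1" and prior_pos: "\<And>i. i < X \<Longrightarrow> pi0 i > 0"
    and B_pos: "\<And>i y. i < X \<Longrightarrow> y < Y \<Longrightarrow> B i y > 0"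
    and B_stoch: "\<And>i. i < X \<Longrightarrow> (\<Sum>y<Y. B i y) = 1"
    and dag: "\<And>m n. E m n \<Longrightarrow> m < n"
begin

abbreviation "PS zs n \<equiv> pubs X Y pi0 B act E zs n"
abbreviation "PB zs n \<equiv> prior_belief X Y pi0 B act E zs n"
abbreviation "AC zs n \<equiv> action X Y pi0 B act E zs n"
abbreviation "PU zs n \<equiv> public_belief X Y pi0 B act E zs n"
abbreviation "lam zs k i \<equiv> act_prob X Y B act (PB zs k) (AC zs k) i"
abbreviation "F n \<equiv> fair_set E n"

definition rr where "rr zs n i = pi0 i * (\<Prod>k\<in>F n. lam zs k i)"

lemma pubs_length: "length (PS zs n) = n"
  by (induction n) (simp_all add: Let_def)

lemma pubs_nth: "k < n \<Longrightarrow> PS zs n ! k = PU zs (Suc k)"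
  by (induction n) (auto simp: Let_def nth_append pubs_length public_belief_def less_Suc_eq)

lemma public_eq: "PU zs (Suc m) = pub_update X Y B act (PB zs (Suc m)) (AC zs (Suc m))"
  by (simp add: public_belief_def prior_belief_def action_def post_belief_def Let_def nth_append pubs_length)

lemma AC_eq: "AC zs m = act (eta X B (PB zs m) (zs m))"
  by (simp add: action_def post_belief_def)

lemma pubs_dep: "(\<And>k. 1 \<le> k \<Longrightarrow> k \<le> n \<Longrightarrow> zs k = zs' k) \<Longrightarrow> PS zs n = PS zs' n"
proof (induction n)
  case (Suc n)
  have "PS zs n = PS zs' n" using Suc.prems by (intro Suc.IH) auto
  moreover have "zs (Suc n) = zs' (Suc n)" using Suc.prems by auto
  ultimately show ?case by (simp add: Let_def)
qed simp

lemma PB_dep: "(\<And>k. 1 \<le> k \<Longrightarrow> k < n \<Longrightarrow> zs k = zs' k) \<Longrightarrow> PB zs n = PB zs' n"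
proof -
  assume a: "\<And>k. 1 \<le> k \<Longrightarrow> k < n \<Longrightarrow> zs k = zs' k"
  have "PS zs (n-1) = PS zs' (n-1)" by (rule pubs_dep) (use a in auto)
  thus ?thesis unfolding prior_belief_def by simp
qed

lemma AC_dep: "1 \<le> n \<Longrightarrow> (\<And>k. 1 \<le> k \<Longrightarrow> k \<le> n \<Longrightarrow> zs k = zs' k) \<Longrightarrow> AC zs n = AC zs' n"
  unfolding AC_eq using PB_dep[of n zs zs'] by auto

lemma act_prob_pos: "i < X \<Longrightarrow> y0 < Y \<Longrightarrow> act_prob X Y B act p (act (eta X B p y0)) i > 0"
  unfolding act_prob_def
  by (rule sum_pos2[of _ y0]) (auto intro: less_imp_le B_pos)

lemma lam_pos: "(\<And>k. zs k < Y) \<Longrightarrow> i < X \<Longrightarrow> lam zs k i > 0"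
  unfolding AC_eq by (rule act_prob_pos) auto

lemma rr_pos: "(\<And>k. zs k < Y) \<Longrightarrow> i < X \<Longrightarrow> rr zs n i > 0"
proof -
  assume a: "\<And>k. zs k < Y" "i < X"
  have "(\<Prod>k\<in>F n. lam zs k i) > 0" by (rule prod_pos) (use lam_pos[OF a(1) a(2)] in auto)
  thus ?thesis using prior_pos[OF a(2)] unfolding rr_def by simp
qed

lemma rr_sum_pos: "(\<And>k. zs k < Y) \<Longrightarrow> (\<Sum>j<X. rr zs n j) > 0"
  using rr_pos X_pos by (intro sum_pos) (auto simp: lessThan_empty_iff)

lemma PB_agree:
  "(\<And>k. k \<in> F n \<Longrightarrow> AC zs k = AC zs' k) \<Longrightarrow> PB zs n = PB zs' n"
proof (induction n rule: less_induct)
  case (less n)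
  have "(\<Sum>m = 1..<n. weights E n $ (m - 1) * (ln ((PS zs (n-1) ! (m - 1)) i) - ln (pi0 i)))
      = (\<Sum>m = 1..<n. weights E n $ (m - 1) * (ln ((PS zs' (n-1) ! (m - 1)) i) - ln (pi0 i)))" for i
  proof (rule sum.cong[OF refl])
    fix m assume m: "m \<in> {1..<n}"
    show "weights E n $ (m - 1) * (ln ((PS zs (n-1) ! (m - 1)) i) - ln (pi0 i))
      = weights E n $ (m - 1) * (ln ((PS zs' (n-1) ! (m - 1)) i) - ln (pi0 i))"
    proof (cases "m \<in> F n")
      case True
      have sub: "F m \<subseteq> F n" using fair_trans[OF dag True] .
      have "PB zs m = PB zs' m" using less.IH[of m] less.prems sub m by auto
      moreover have "AC zs m = AC zs' m" using less.prems True by auto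
      moreover have "PS zs (n-1) ! (m - 1) = PU zs m" "PS zs' (n-1) ! (m - 1) = PU zs' m"
        using m pubs_nth[of "m-1" "n-1"] by auto
      moreover have "PU zs m = pub_update X Y B act (PB zs m) (AC zs m)"
        "PU zs' m = pub_update X Y B act (PB zs' m) (AC zs' m)"
        using public_eq[of _ "m-1"] m by auto
      ultimately show ?thesis by simp
    next
      case False
      hence "\<not> reach E (m-1) (n-1)" using m fair_set_reach[OF dag] by auto
      hence "weights E n $ (m - 1) = 0" using m by (intro weights_zero[OF dag]) auto
      thus ?thesis by simp
    qed
  qed
  thus ?case unfolding prior_belief_def rec_belief_def by simp
qed

lemma fin_F: "finite (F n)"
  using fair_sub[OF dag] finite_subset by blast

lemma prior_formula:
  assumes ys: "\<And>k. ys k < Y"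
  shows "1 \<le> n \<Longrightarrow> i < X \<Longrightarrow> PB ys n i = normalize X (rr ys n) i"
proof (induction n arbitrary: i rule: less_induct)
  case (less n)
  define w where "w k = weights E n $ k" for k
  define Z where "Z k = (\<Sum>j<X. lam ys k j * rr ys k j)" for k
  have Zpos: "Z k > 0" for k
    unfolding Z_def using X_pos lam_pos[where zs=ys, OF ys] rr_pos[where zs=ys, OF ys]
    by (intro sum_pos) (auto simp: lessThan_empty_iff)
  have pk: "(PS ys (n-1) ! (k-1)) j = lam ys k j * rr ys k j / Z k" if k: "k \<in> {1..<n}" and j: "j < X" for k j
  proof -
    have "PS ys (n-1) ! (k-1) = PU ys k" using k pubs_nth[of "k-1" "n-1"] by auto
    also have "\<dots> = pub_update X Y B act (PB ys k) (AC ys k)" using public_eq[of ys "k-1"] k by auto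
    finally have "(PS ys (n-1) ! (k-1)) j = normalize X (\<lambda>j. lam ys k j * PB ys k j) j"
      by (simp add: pub_update_def)
    also have "\<dots> = normalize X (\<lambda>j. lam ys k j * normalize X (rr ys k) j) j"
      using less.IH[of k] k j by (intro normalize_cong) auto
    also have "\<dots> = normalize X (\<lambda>j. lam ys k j * rr ys k j) j"
      using rr_sum_pos[where zs=ys and n=k, OF ys] by (subst normalize_nested) auto
    also have "\<dots> = lam ys k j * rr ys k j / Z k" by (simp add: normalize_def Z_def)
    finally show ?thesis .
  qed
  have rl: "\<And>a b. reach E a b \<Longrightarrow> a \<le> b" using reach_le[of E, OF dag] by blast
  have setk: "{m\<in>{1..<n}. reach E (m-1) (k-1)} = insert k (F k)" if k: "k \<in> {1..<n}" for k
  proof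
    show "{m\<in>{1..<n}. reach E (m-1) (k-1)} \<subseteq> insert k (F k)"
    proof
      fix x assume x: "x \<in> {m\<in>{1..<n}. reach E (m-1) (k-1)}"
      hence "x - 1 \<le> k - 1" using rl by auto
      hence "x \<le> k" using x k by auto
      thus "x \<in> insert k (F k)" using x k by (auto simp: fair_set_reach[of E k, OF dag])
    qed
    show "insert k (F k) \<subseteq> {m\<in>{1..<n}. reach E (m-1) (k-1)}"
      using k by (auto simp: fair_set_reach[of E k, OF dag] reach.rrefl)
  qed
  have lk: "ln ((PS ys (n-1) ! (k-1)) j) - ln (pi0 j)
      = (\<Sum>m\<in>{1..<n}. (if reach E (m-1) (k-1) then 1 else 0) * ln (lam ys m j)) - ln (Z k)"
    if k: "k \<in> {1..<n}" and j: "j < X" for k j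
  proof -
    have kF: "k \<notin> F k" using fair_sub[of E k, OF dag] by auto
    have "(\<Sum>m\<in>{1..<n}. (if reach E (m-1) (k-1) then 1 else 0) * ln (lam ys m j))
        = (\<Sum>m\<in>insert k (F k). ln (lam ys m j))"
      by (simp only: sum_if_filter[OF finite_atLeastLessThan] setk[OF k])
    also have "\<dots> = ln (lam ys k j) + (\<Sum>m\<in>F k. ln (lam ys m j))" using kF fin_F by simp
    also have "(\<Sum>m\<in>F k. ln (lam ys m j)) = ln (\<Prod>m\<in>F k. lam ys m j)"
    proof -
      have nz: "\<And>m. lam ys m j \<noteq> 0" using lam_pos[where zs=ys and i=j, OF ys j] by (metis less_irrefl)
      show ?thesis by (intro ln_prod[symmetric] fin_F nz)
    qed
    finally have 1: "(\<Sum>m\<in>{1..<n}. (if reach E (m-1) (k-1) then 1 else 0) * ln (lam ys m j))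
       = ln (lam ys k j) + ln (\<Prod>m\<in>F k. lam ys m j)" .
    have pp: "(\<Prod>m\<in>F k. lam ys m j) > 0" using lam_pos[where zs=ys and i=j, OF ys j] by (intro prod_pos) auto
    have "ln ((PS ys (n-1) ! (k-1)) j) = ln (lam ys k j * (pi0 j * (\<Prod>m\<in>F k. lam ys m j)) / Z k)"
      using pk[OF k j] by (simp add: rr_def)
    also have "\<dots> = ln (lam ys k j) + (ln (pi0 j) + ln (\<Prod>m\<in>F k. lam ys m j)) - ln (Z k)"
      using lam_pos[where zs=ys and i=j and k=k, OF ys j] prior_pos[OF j] pp Zpos[of k] by (simp add: ln_div ln_mult)
    finally show ?thesis using 1 by simp
  qed
  have wsum: "(\<Sum>k=1..<n. (if reach E (m-1) (k-1) then 1 else 0) * w (k-1)) = (if reach E (m-1) (n-1) then 1 else 0)"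
    if m: "m \<in> {1..<n}" for m
  proof -
    have mm: "m - 1 < n - 1" using m by auto
    have "(\<Sum>k=1..<n. (if reach E (m-1) (k-1) then 1 else 0) * w (k-1))
        = (\<Sum>k<n-1. (if reach E (m-1) k then 1 else 0) * w k)"
      using shift_sum[where g="\<lambda>k. (if reach E (m-1) k then 1 else 0) * w k" and n=n] by simp
    also have "\<dots> = (if reach E (m-1) (n-1) then 1 else 0)"
      unfolding w_def by (rule weights_prop[of E "m-1" n, OF dag mm])
    finally show ?thesis .
  qed
  have Fn: "{m\<in>{1..<n}. reach E (m-1) (n-1)} = F n" by (auto simp: fair_set_reach[OF dag])
  define C where "C = (\<Sum>k=1..<n. w (k-1) * ln (Z k))"
  have S: "(\<Sum>k=1..<n. w (k-1) * (ln ((PS ys (n-1) ! (k-1)) j) - ln (pi0 j)))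
      = (\<Sum>m\<in>F n. ln (lam ys m j)) - C" if j: "j < X" for j
  proof -
    have "(\<Sum>k=1..<n. w (k-1) * (ln ((PS ys (n-1) ! (k-1)) j) - ln (pi0 j)))
       = (\<Sum>k=1..<n. w (k-1) * ((\<Sum>m\<in>{1..<n}. (if reach E (m-1) (k-1) then 1 else 0) * ln (lam ys m j)) - ln (Z k)))"
      using lk j by (intro sum.cong) auto
    also have "\<dots> = (\<Sum>k=1..<n. \<Sum>m=1..<n. w (k-1) * ((if reach E (m-1) (k-1) then 1 else 0) * ln (lam ys m j))) - C"
      by (simp add: right_diff_distrib sum_subtractf sum_distrib_left C_def)
    also have "(\<Sum>k=1..<n. \<Sum>m=1..<n. w (k-1) * ((if reach E (m-1) (k-1) then 1 else 0) * ln (lam ys m j)))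
       = (\<Sum>m=1..<n. ln (lam ys m j) * (\<Sum>k=1..<n. (if reach E (m-1) (k-1) then 1 else 0) * w (k-1)))"
      by (subst sum.swap) (simp add: sum_distrib_left sum_distrib_right mult_ac)
    also have "\<dots> = (\<Sum>m=1..<n. (if reach E (m-1) (n-1) then 1 else 0) * ln (lam ys m j))"
      using wsum by (intro sum.cong) auto
    also have "\<dots> = (\<Sum>m\<in>F n. ln (lam ys m j))" by (simp only: sum_if_filter[OF finite_atLeastLessThan] Fn)
    finally show ?thesis .
  qed
  have "PB ys n i = normalize X (\<lambda>j. pi0 j * exp (\<Sum>k=1..<n. w (k-1) * (ln ((PS ys (n-1) ! (k-1)) j) - ln (pi0 j)))) i"
    by (simp add: prior_belief_def rec_belief_def w_def)
  also have "\<dots> = normalize X (\<lambda>j. exp (-C) * rr ys n j) i"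
  proof (rule normalize_cong)
    fix j assume j: "j < X"
    have EX: "exp (\<Sum>m\<in>F n. ln (lam ys m j)) = (\<Prod>m\<in>F n. lam ys m j)"
      using lam_pos[where zs=ys and i=j, OF ys j] fin_F by (simp add: exp_sum)
    have "exp (\<Sum>k=1..<n. w (k-1) * (ln ((PS ys (n-1) ! (k-1)) j) - ln (pi0 j)))
        = exp ((\<Sum>m\<in>F n. ln (lam ys m j)) - C)" by (rule arg_cong[where f=exp, OF S[OF j]])
    also have "\<dots> = exp (-C) * (\<Prod>m\<in>F n. lam ys m j)"
      unfolding exp_diff EX by (simp add: exp_minus divide_inverse mult.commute)
    finally show "pi0 j * exp (\<Sum>k=1..<n. w (k-1) * (ln ((PS ys (n-1) ! (k-1)) j) - ln (pi0 j))) = exp (-C) * rr ys n j"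
      by (simp add: rr_def)
  qed (rule less.prems)
  also have "\<dots> = normalize X (rr ys n) i" by (simp add: normalize_scale)
  finally show ?case .
qed

lemma fair_sum:
  assumes i: "i < X"
  shows "S \<subseteq> {1..N} \<Longrightarrow> (\<forall>m\<in>S. F m \<subseteq> S) \<Longrightarrow>
    (\<Sum>zs\<in>PiE {1..N} (\<lambda>_. {..<Y}). if (\<forall>m\<in>S. AC zs m = AC ys m) then (\<Prod>k=1..N. B i (zs k)) else 0)
    = (\<Prod>m\<in>S. lam ys m i)"
proof (induction N arbitrary: S)
  case 0
  hence "S = {}" by auto
  thus ?case by simp
next
  case (Suc N)
  define S' where "S' = S - {Suc N}"
  have S'sub: "S' \<subseteq> {1..N}" using Suc.prems(1) by (auto simp: S'_def)
  have S'cl: "\<forall>m\<in>S'. F m \<subseteq> S'"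
  proof
    fix m assume m: "m \<in> S'"
    have "F m \<subseteq> {1..<m}" by (rule fair_sub[OF dag])
    moreover have "m \<le> N" using m S'sub by auto
    ultimately show "F m \<subseteq> S'" using Suc.prems(2) m unfolding S'_def by auto
  qed
  note IH = Suc.IH[OF S'sub S'cl]
  have acsame: "AC (zs(Suc N:=y)) m = AC zs m" if "m \<in> S'" for zs y m
    using that S'sub by (intro AC_dep) auto
  have inner: "(\<Sum>y<Y. if (\<forall>m\<in>S. AC (zs(Suc N:=y)) m = AC ys m) then \<Prod>k=1..Suc N. B i ((zs(Suc N:=y)) k) else 0)
     = (if (\<forall>m\<in>S'. AC zs m = AC ys m) then \<Prod>k=1..N. B i (zs k) else 0) * (if Suc N \<in> S then lam ys (Suc N) i else 1)"
    for zs
  proof (cases "\<forall>m\<in>S'. AC zs m = AC ys m")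
    case False
    then obtain m where m: "m \<in> S'" "AC zs m \<noteq> AC ys m" by auto
    have "\<not> (\<forall>m\<in>S. AC (zs(Suc N:=y)) m = AC ys m)" for y
    proof
      assume "\<forall>m\<in>S. AC (zs(Suc N:=y)) m = AC ys m"
      hence "AC (zs(Suc N:=y)) m = AC ys m" using m(1) unfolding S'_def by auto
      thus False using acsame[OF m(1)] m(2) by simp
    qed
    hence z: "\<And>y. (\<forall>m\<in>S. AC (zs(Suc N:=y)) m = AC ys m) = False" by blast
    have nev: "(\<forall>m\<in>S'. AC zs m = AC ys m) = False" using False by blast
    show ?thesis by (simp only: z nev if_False sum.neutral_const mult_zero_left)
  next
    case True
    note ev = True
    show ?thesis
    proof (cases "Suc N \<in> S")
      case True
      have FS: "F (Suc N) \<subseteq> S'" using Suc.prems(2) True fair_sub[of E "Suc N", OF dag] unfolding S'_def by auto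
      have PBeq: "PB (zs(Suc N:=y)) (Suc N) = PB ys (Suc N)" for y
      proof -
        have "PB (zs(Suc N:=y)) (Suc N) = PB zs (Suc N)" by (rule PB_dep) auto
        also have "\<dots> = PB ys (Suc N)" using ev FS by (intro PB_agree) auto
        finally show ?thesis .
      qed
      have "(\<forall>m\<in>S. AC (zs(Suc N:=y)) m = AC ys m) \<longleftrightarrow> act (eta X B (PB ys (Suc N)) y) = AC ys (Suc N)" for y
      proof -
        have "S = insert (Suc N) S'" using True unfolding S'_def by auto
        moreover have "AC (zs(Suc N:=y)) (Suc N) = act (eta X B (PB ys (Suc N)) y)"
          using PBeq[of y] by (simp add: AC_eq)
        ultimately show ?thesis using ev acsame by auto
      qed
      hence "(\<Sum>y<Y. if (\<forall>m\<in>S. AC (zs(Suc N:=y)) m = AC ys m) then \<Prod>k=1..Suc N. B i ((zs(Suc N:=y)) k) else 0)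
          = (\<Sum>y<Y. if act (eta X B (PB ys (Suc N)) y) = AC ys (Suc N) then B i y * (\<Prod>k=1..N. B i (zs k)) else 0)"
        unfolding prod_upd_split by simp
      also have "\<dots> = (\<Prod>k=1..N. B i (zs k)) * lam ys (Suc N) i"
        unfolding act_prob_def by (auto simp: sum_distrib_left intro: sum.cong)
      finally show ?thesis using ev True by simp
    next
      case False
      hence SS: "S = S'" unfolding S'_def by auto
      have "(\<Sum>y<Y. if (\<forall>m\<in>S. AC (zs(Suc N:=y)) m = AC ys m) then \<Prod>k=1..Suc N. B i ((zs(Suc N:=y)) k) else 0)
          = (\<Sum>y<Y. B i y * (\<Prod>k=1..N. B i (zs k)))"
        using ev acsame SS unfolding prod_upd_split by simp
      also have "\<dots> = (\<Prod>k=1..N. B i (zs k))" using B_stoch[OF i] by (simp add: sum_distrib_right[symmetric])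
      finally show ?thesis using ev False by simp
    qed
  qed
  have "(\<Sum>zs\<in>PiE {1..Suc N} (\<lambda>_. {..<Y}). if (\<forall>m\<in>S. AC zs m = AC ys m) then (\<Prod>k=1..Suc N. B i (zs k)) else 0)
      = (\<Sum>zs\<in>PiE {1..N} (\<lambda>_. {..<Y}). (if (\<forall>m\<in>S'. AC zs m = AC ys m) then \<Prod>k=1..N. B i (zs k) else 0) * (if Suc N \<in> S then lam ys (Suc N) i else 1))"
    unfolding sum_PiE_peel using inner by (intro sum.cong) auto
  also have "\<dots> = (\<Prod>m\<in>S'. lam ys m i) * (if Suc N \<in> S then lam ys (Suc N) i else 1)"
    by (simp only: sum_distrib_right[symmetric] IH)
  also have "\<dots> = (\<Prod>m\<in>S. lam ys m i)"
  proof -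
    have fS: "finite S" using Suc.prems(1) finite_subset by blast
    show ?thesis
    proof (cases "Suc N \<in> S")
      case True
      then show ?thesis using fS unfolding S'_def by (simp add: prod.remove mult.commute)
    next
      case False
      then show ?thesis unfolding S'_def by simp
    qed
  qed
  finally show ?case .
qed


lemma main:
  assumes ys: "\<And>k. ys k < Y" and n: "1 \<le> n" and i: "i < X"
  shows "PB ys n i = cond_prob X Y pi0 B (n - 1) (\<lambda>zs. \<forall>m \<in> F n. AC zs m = AC ys m) i
       \<and> post_belief X Y pi0 B act E ys n i =
           cond_prob X Y pi0 B n (\<lambda>zs. (\<forall>m \<in> F n. AC zs m = AC ys m) \<and> zs n = ys n) i
       \<and> PU ys n i =
           cond_prob X Y pi0 B n (\<lambda>zs. (\<forall>m \<in> F n. AC zs m = AC ys m) \<and> AC zs n = AC ys n) i"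
proof -
  obtain N where nN: "n = Suc N" using n by (cases n) auto
  have Fsub0: "F n \<subseteq> {1..<n}" by (rule fair_sub[of E n, OF dag])
  have Fsub: "F n \<subseteq> {1..N}" using Fsub0 nN by auto
  have Fcl: "\<forall>m\<in>F n. F m \<subseteq> F n" using fair_trans[of E _ n, OF dag] by blast
  have nF: "n \<notin> F n" using Fsub0 by auto
  have rsum: "(\<Sum>j<X. rr ys n j) \<noteq> 0" using rr_sum_pos[where zs=ys and n=n, OF ys] by simp
  have PBr: "\<And>j. j < X \<Longrightarrow> PB ys n j = normalize X (rr ys n) j"
    using prior_formula[where ys=ys, OF ys n] by blast
  have num1: "(\<Sum>zs\<in>PiE {1..N} (\<lambda>_. {..<Y}). if (\<forall>m\<in>F n. AC zs m = AC ys m)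
        then pi0 j * (\<Prod>k=1..N. B j (zs k)) else 0) = rr ys n j" if j: "j < X" for j
    using fair_sum[where ys=ys, OF j Fsub Fcl] by (simp add: sum_if_const rr_def)
  have c1: "cond_prob X Y pi0 B (n - 1) (\<lambda>zs. \<forall>m \<in> F n. AC zs m = AC ys m) i = normalize X (rr ys n) i"
  proof -
    have "(\<Sum>j<X. \<Sum>zs\<in>PiE {1..N} (\<lambda>_. {..<Y}). if (\<forall>m\<in>F n. AC zs m = AC ys m)
        then pi0 j * (\<Prod>k=1..N. B j (zs k)) else 0) = (\<Sum>j<X. rr ys n j)"
      using num1 by (intro sum.cong) auto
    moreover have nn: "n - 1 = N" using nN by simp
    ultimately show ?thesis unfolding cond_prob_def normalize_def nn using num1[OF i] by simp
  qed
  define S3 where "S3 = insert n (F n)"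
  have S3sub: "S3 \<subseteq> {1..n}" using Fsub0 n unfolding S3_def by auto
  have S3cl: "\<forall>m\<in>S3. F m \<subseteq> S3" using Fcl unfolding S3_def by auto
  have ev3: "((\<forall>m\<in>F n. AC zs m = AC ys m) \<and> AC zs n = AC ys n) = (\<forall>m\<in>S3. AC zs m = AC ys m)" for zs
    unfolding S3_def by auto
  have num3: "(\<Sum>zs\<in>PiE {1..n} (\<lambda>_. {..<Y}). if (\<forall>m\<in>F n. AC zs m = AC ys m) \<and> AC zs n = AC ys n
        then pi0 j * (\<Prod>k=1..n. B j (zs k)) else 0) = lam ys n j * rr ys n j" if j: "j < X" for j
  proof -
    have "(\<Sum>zs\<in>PiE {1..n} (\<lambda>_. {..<Y}). if (\<forall>m\<in>F n. AC zs m = AC ys m) \<and> AC zs n = AC ys n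
        then pi0 j * (\<Prod>k=1..n. B j (zs k)) else 0)
       = pi0 j * (\<Sum>zs\<in>PiE {1..n} (\<lambda>_. {..<Y}). if (\<forall>m\<in>S3. AC zs m = AC ys m)
        then (\<Prod>k=1..n. B j (zs k)) else 0)"
      unfolding ev3 by (rule sum_if_const)
    also have "\<dots> = pi0 j * (\<Prod>m\<in>S3. lam ys m j)" using fair_sum[where ys=ys, OF j S3sub S3cl] by simp
    also have "\<dots> = lam ys n j * rr ys n j" unfolding S3_def rr_def using nF fin_F by simp
    finally show ?thesis .
  qed
  have c3: "cond_prob X Y pi0 B n (\<lambda>zs. (\<forall>m \<in> F n. AC zs m = AC ys m) \<and> AC zs n = AC ys n) i
      = normalize X (\<lambda>j. lam ys n j * rr ys n j) i"
  proof -
    have "(\<Sum>j<X. \<Sum>zs\<in>PiE {1..n} (\<lambda>_. {..<Y}). if (\<forall>m\<in>F n. AC zs m = AC ys m) \<and> AC zs n = AC ys n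
        then pi0 j * (\<Prod>k=1..n. B j (zs k)) else 0) = (\<Sum>j<X. lam ys n j * rr ys n j)"
      using num3 by (intro sum.cong) auto
    thus ?thesis unfolding cond_prob_def normalize_def using num3[OF i] by simp
  qed
  have p3: "PU ys n i = normalize X (\<lambda>j. lam ys n j * rr ys n j) i"
  proof -
    have "PU ys n = pub_update X Y B act (PB ys n) (AC ys n)" using public_eq[of ys N] nN by simp
    hence "PU ys n i = normalize X (\<lambda>j. lam ys n j * PB ys n j) i" by (simp add: pub_update_def)
    also have "\<dots> = normalize X (\<lambda>j. lam ys n j * normalize X (rr ys n) j) i"
      using PBr i by (intro normalize_cong) auto
    also have "\<dots> = normalize X (\<lambda>j. lam ys n j * rr ys n j) i" using rsum by (simp add: normalize_nested)
    finally show ?thesis .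
  qed
  have acs: "AC (zs(n := y)) m = AC zs m" if "m \<in> F n" for zs y m
    using that Fsub nN by (intro AC_dep) auto
  have num2: "(\<Sum>zs\<in>PiE {1..n} (\<lambda>_. {..<Y}). if (\<forall>m\<in>F n. AC zs m = AC ys m) \<and> zs n = ys n
        then pi0 j * (\<Prod>k=1..n. B j (zs k)) else 0) = B j (ys n) * rr ys n j" if j: "j < X" for j
  proof -
    have "(\<Sum>zs\<in>PiE {1..n} (\<lambda>_. {..<Y}). if (\<forall>m\<in>F n. AC zs m = AC ys m) \<and> zs n = ys n
        then pi0 j * (\<Prod>k=1..n. B j (zs k)) else 0)
       = (\<Sum>zs\<in>PiE {1..N} (\<lambda>_. {..<Y}). \<Sum>y<Y. if (\<forall>m\<in>F n. AC (zs(n:=y)) m = AC ys m) \<and> y = ys n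
        then pi0 j * (B j y * (\<Prod>k=1..N. B j (zs k))) else 0)"
      unfolding nN sum_PiE_peel prod_upd_split by simp
    also have "\<dots> = (\<Sum>zs\<in>PiE {1..N} (\<lambda>_. {..<Y}). if (\<forall>m\<in>F n. AC zs m = AC ys m)
        then (pi0 j * B j (ys n)) * (\<Prod>k=1..N. B j (zs k)) else 0)"
    proof (rule sum.cong[OF refl])
      fix zs
      have "(\<Sum>y<Y. if (\<forall>m\<in>F n. AC (zs(n:=y)) m = AC ys m) \<and> y = ys n
          then pi0 j * (B j y * (\<Prod>k=1..N. B j (zs k))) else 0)
        = (\<Sum>y<Y. if y = ys n then (if (\<forall>m\<in>F n. AC zs m = AC ys m)
          then pi0 j * (B j y * (\<Prod>k=1..N. B j (zs k))) else 0) else 0)"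
        using acs by (intro sum.cong) auto
      also have "\<dots> = (if (\<forall>m\<in>F n. AC zs m = AC ys m)
          then (pi0 j * B j (ys n)) * (\<Prod>k=1..N. B j (zs k)) else 0)"
        using ys[of n] by (simp add: sum.delta)
      finally show "(\<Sum>y<Y. if (\<forall>m\<in>F n. AC (zs(n:=y)) m = AC ys m) \<and> y = ys n
          then pi0 j * (B j y * (\<Prod>k=1..N. B j (zs k))) else 0)
        = (if (\<forall>m\<in>F n. AC zs m = AC ys m)
          then (pi0 j * B j (ys n)) * (\<Prod>k=1..N. B j (zs k)) else 0)" .
    qed
    also have "\<dots> = (pi0 j * B j (ys n)) * (\<Prod>m\<in>F n. lam ys m j)"
      by (simp only: sum_if_const fair_sum[where ys=ys, OF j Fsub Fcl])
    also have "\<dots> = B j (ys n) * rr ys n j" unfolding rr_def by simp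
    finally show ?thesis .
  qed
  have c2: "cond_prob X Y pi0 B n (\<lambda>zs. (\<forall>m \<in> F n. AC zs m = AC ys m) \<and> zs n = ys n) i
      = normalize X (\<lambda>j. B j (ys n) * rr ys n j) i"
  proof -
    have "(\<Sum>j<X. \<Sum>zs\<in>PiE {1..n} (\<lambda>_. {..<Y}). if (\<forall>m\<in>F n. AC zs m = AC ys m) \<and> zs n = ys n
        then pi0 j * (\<Prod>k=1..n. B j (zs k)) else 0) = (\<Sum>j<X. B j (ys n) * rr ys n j)"
      using num2 by (intro sum.cong) auto
    thus ?thesis unfolding cond_prob_def normalize_def using num2[OF i] by simp
  qed
  have p2: "post_belief X Y pi0 B act E ys n i = normalize X (\<lambda>j. B j (ys n) * rr ys n j) i"
  proof -
    have "post_belief X Y pi0 B act E ys n i = normalize X (\<lambda>j. B j (ys n) * PB ys n j) i"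
      by (simp add: post_belief_def eta_def)
    also have "\<dots> = normalize X (\<lambda>j. B j (ys n) * normalize X (rr ys n) j) i"
      using PBr i by (intro normalize_cong) auto
    also have "\<dots> = normalize X (\<lambda>j. B j (ys n) * rr ys n j) i" using rsum by (simp add: normalize_nested)
    finally show ?thesis .
  qed
  show ?thesis using c1 c2 c3 p2 p3 PBr[OF i] by simp
qed

end

theorem theorem2:
  fixes X Y A :: nat and pi0 :: "nat \<Rightarrow> real" and B :: "nat \<Rightarrow> nat \<Rightarrow> real"
    and c :: "nat \<Rightarrow> nat \<Rightarrow> real" and act :: "(nat \<Rightarrow> real) \<Rightarrow> nat"
    and E :: "nat \<Rightarrow> nat \<Rightarrow> bool" and ys :: "nat \<Rightarrow> nat"
  assumes X_pos: "X \<ge> 1" and Y_pos: "Y \<ge> 1" and A_pos: "A \<ge> 1"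
    and prior_pos: "\<And>i. i < X \<Longrightarrow> pi0 i > 0"
    and prior_sum: "(\<Sum>i<X. pi0 i) = 1"
    and B_pos: "\<And>i y. i < X \<Longrightarrow> y < Y \<Longrightarrow> B i y > 0"
    and B_stoch: "\<And>i. i < X \<Longrightarrow> (\<Sum>y<Y. B i y) = 1"
    and act_argmin: "\<And>\<eta>. act \<eta> < A \<and>
        (\<forall>a<A. (\<Sum>i<X. c (act \<eta>) i * \<eta> i) \<le> (\<Sum>i<X. c a i * \<eta> i))"
    and E_dag: "\<And>m n. E m n \<Longrightarrow> m < n"
    and ys_range: "\<And>k. ys k < Y"
    and n_pos: "n \<ge> 1" and i_lt: "i < X"
  shows "prior_belief X Y pi0 B act E ys n i =
           cond_prob X Y pi0 B (n - 1)
             (\<lambda>zs. \<forall>m \<in> fair_set E n. action X Y pi0 B act E zs m = action X Y pi0 B act E ys m) i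
       \<and> post_belief X Y pi0 B act E ys n i =
           cond_prob X Y pi0 B n
             (\<lambda>zs. (\<forall>m \<in> fair_set E n. action X Y pi0 B act E zs m = action X Y pi0 B act E ys m)
                   \<and> zs n = ys n) i
       \<and> public_belief X Y pi0 B act E ys n i =
           cond_prob X Y pi0 B n
             (\<lambda>zs. (\<forall>m \<in> fair_set E n. action X Y pi0 B act E zs m = action X Y pi0 B act E ys m)
                   \<and> action X Y pi0 B act E zs n = action X Y pi0 B act E ys n) i"
proof -
  interpret model X Y pi0 B act E
    using X_pos prior_pos B_pos B_stoch E_dag by unfold_locales auto
  show ?thesis by (rule main[OF ys_range n_pos i_lt])
qed

end
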